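(* Let $\mathcal A=(\mathbf a,\mathbf b)$ be a binary GCP of length $M$ and let $\mathcal B=(\mathbf c,\mathbf d)$ be a binary $(N,Z)$-CZCP. Let $(\mathbf e,\mathbf f)=\mathrm{Turyn}(\mathcal A,\mathcal B)$, i.e. $$\mathbf e=\mathbf c\otimes\frac{\mathbf a+\mathbf b}2-\overleftarrow{\mathbf d}\otimes\frac{\mathbf b-\mathbf a}2,\qquad \mathbf f=\mathbf d\otimes\frac{\mathbf a+\mathbf b}2+\overleftarrow{\mathbf c}\otimes\frac{\mathbf b-\mathbf a}2 .$$ Then $(\mathbf e,\mathbf f)$ is an $(NM,ZM)$-CZCP.
   Context: A binary GCP of length $M$ is a pair of $\pm1$ sequences with $\rho_{\mathbf a}(\tau)+\rho_{\mathbf b}(\tau)=0$ for all $\tau\ne0$. $\overleftarrow{\mathbf u}$ denotes the reversal of $\mathbf u$ and $\mathbf u\otimes\mathbf v=(u_0\mathbf v,u_1\mathbf v,\dots,u_{N-1}\mathbf v)$ the Kronecker product (so $\mathbf e,\mathbf f$ have length $NM$). Aperiodic correlation of real sequences of length $L$: $\rho_{\mathbf a,\mathbf b}(\tau)=\sum_{k=0}^{L-1-\tau}a_kb_{k+\tau}$ for $0\le\tau\le L-1$, $\rho_{\mathbf a,\mathbf b}(\tau)=\sum_{k=0}^{L-1+\tau}a_{k-\tau}b_k$ for $-(L-1)\le\tau\le-1$, $0$ otherwise; $\rho_{\mathbf a}=\rho_{\mathbf a,\mathbf a}$. CZCP: with $\mathcal T_1=\{1,\dots,Z\}$, $\mathcal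 T_2=\{L-Z,\dots,L-1\}$, a pair $(\mathbf a,\mathbf b)$ of length-$L$ sequences is an $(L,Z)$-CZCP if $\rho_{\mathbf a}(\tau)+\rho_{\mathbf b}(\tau)=0$ for all $|\tau|\in\mathcal T_1\cup\mathcal T_2$ and $\rho_{\mathbf a,\mathbf b}(\tau)+\rho_{\mathbf b,\mathbf a}(\tau)=0$ for all $|\tau|\in\mathcal T_2$. *)

theory Defs
  imports Complex_Main
begin

definition binary :: "real list \<Rightarrow> bool" where
  "binary u \<longleftrightarrow> (\<forall>x\<in>set u. x = 1 \<or> x = -1)"

definition acorr :: "real list \<Rightarrow> real list \<Rightarrow> int \<Rightarrow> real" where
  "acorr a b \<tau> =
    (let L = int (length a) in
     if 0 \<le> \<tau> \<and> \<tau> \<le> L - 1 then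
       (\<Sum>k=0..L-1-\<tau>. a ! nat k * b ! nat (k + \<tau>))
     else if -(L - 1) \<le> \<tau> \<and> \<tau> \<le> -1 then
       (\<Sum>k=0..L-1+\<tau>. a ! nat (k - \<tau>) * b ! nat k)
     else 0)"

abbreviation aacorr :: "real list \<Rightarrow> int \<Rightarrow> real" where
  "aacorr a \<equiv> acorr a a"

definition GCP :: "real list \<Rightarrow> real list \<Rightarrow> bool" where
  "GCP a b \<longleftrightarrow> length a = length b \<and>
     (\<forall>\<tau>::int. \<tau> \<noteq> 0 \<longrightarrow> aacorr a \<tau> + aacorr b \<tau> = 0)"

definition binary_GCP :: "real list \<Rightarrow> real list \<Rightarrow> nat \<Rightarrow> bool" where
  "binary_GCP a b M \<longleftrightarrow> binary a \<and> binary b \<and> length a = M \<and> length b = M \<and> GCP a b"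

definition CZCP :: "real list \<Rightarrow> real list \<Rightarrow> nat \<Rightarrow> nat \<Rightarrow> bool" where
  "CZCP a b L Z \<longleftrightarrow> length a = L \<and> length b = L \<and>
     (let T1 = {1..int Z}; T2 = {int L - int Z..int L - 1} in
       (\<forall>\<tau>::int. \<bar>\<tau>\<bar> \<in> T1 \<union> T2 \<longrightarrow> aacorr a \<tau> + aacorr b \<tau> = 0) \<and>
       (\<forall>\<tau>::int. \<bar>\<tau>\<bar> \<in> T2 \<longrightarrow> acorr a b \<tau> + acorr b a \<tau> = 0))"

definition binary_CZCP :: "real list \<Rightarrow> real list \<Rightarrow> nat \<Rightarrow> nat \<Rightarrow> bool" where
  "binary_CZCP a b L Z \<longleftrightarrow> binary a \<and> binary b \<and> CZCP a b L Z"

definition kron :: "real list \<Rightarrow> real list \<Rightarrow> real list" where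
  "kron u v = concat (map (\<lambda>x. map (\<lambda>y. x * y) v) u)"

definition vadd :: "real list \<Rightarrow> real list \<Rightarrow> real list" where
  "vadd u v = map2 (+) u v"

definition vsub :: "real list \<Rightarrow> real list \<Rightarrow> real list" where
  "vsub u v = map2 (-) u v"

definition vscale :: "real \<Rightarrow> real list \<Rightarrow> real list" where
  "vscale c u = map (\<lambda>x. c * x) u"

definition turyn_e :: "real list \<Rightarrow> real list \<Rightarrow> real list \<Rightarrow> real list \<Rightarrow> real list" where
  "turyn_e a b c d =
     vsub (kron c (vscale (1/2) (vadd a b))) (kron (rev d) (vscale (1/2) (vsub b a)))"

definition turyn_f :: "real list \<Rightarrow> real list \<Rightarrow> real list \<Rightarrow> real list \<Rightarrow> real list" where
  "turyn_f a b c d =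
     vadd (kron d (vscale (1/2) (vadd a b))) (kron (rev c) (vscale (1/2) (vsub b a)))"

end

theory Submission
  imports Defs
begin

definition ext :: "real list \<Rightarrow> int \<Rightarrow> real" where
  "ext a k = (if 0 \<le> k \<and> k < int (length a) then a ! nat k else 0)"

definition cor :: "nat \<Rightarrow> (int \<Rightarrow> real) \<Rightarrow> (int \<Rightarrow> real) \<Rightarrow> int \<Rightarrow> real" where
  "cor L x y \<tau> = (\<Sum>k\<in>{0..<int L}. x k * y (k + \<tau>))"

lemma acorr_cor:
  assumes "length b = length a"
  shows "acorr a b \<tau> = cor (length a) (ext a) (ext b) \<tau>"
proof -
  define L where "L = int (length a)"
  show ?thesis
  proof (cases "0 \<le> \<tau> \<and> \<tau> \<le> L - 1")
    case True
    have "acorr a b \<tau> = (\<Sum>k=0..L-1-\<tau>. a ! nat k * b ! nat (k + \<tau>))"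
      using True unfolding acorr_def L_def Let_def by simp
    also have "\<dots> = (\<Sum>k\<in>{0..<L}. ext a k * ext b (k + \<tau>))"
      apply (rule sum.mono_neutral_cong_left)
      using True assms by (auto simp: ext_def L_def)
    finally show ?thesis unfolding cor_def L_def .
  next
    case F1: False
    show ?thesis
    proof (cases "-(L - 1) \<le> \<tau> \<and> \<tau> \<le> -1")
      case True
      have "acorr a b \<tau> = (\<Sum>k=0..L-1+\<tau>. a ! nat (k - \<tau>) * b ! nat k)"
        using True F1 unfolding acorr_def L_def Let_def by simp
      also have "\<dots> = (\<Sum>k\<in>{-\<tau>..<L}. ext a k * ext b (k + \<tau>))"
        apply (rule sum.reindex_bij_witness[of _ "\<lambda>k. k + \<tau>" "\<lambda>k. k - \<tau>"])
        using True assms by (auto simp: ext_def L_def)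
      also have "\<dots> = (\<Sum>k\<in>{0..<L}. ext a k * ext b (k + \<tau>))"
        apply (rule sum.mono_neutral_cong_left)
        using True assms by (auto simp: ext_def L_def)
      finally show ?thesis unfolding cor_def L_def .
    next
      case False
      have "acorr a b \<tau> = 0" using False F1 unfolding acorr_def L_def Let_def by auto
      also have "0 = (\<Sum>k\<in>{0..<L}. ext a k * ext b (k + \<tau>))"
        apply (rule sym, rule sum.neutral)
        using False F1 assms by (auto simp: ext_def L_def)
      finally show ?thesis unfolding cor_def L_def .
    qed
  qed
qed


lemma length_kron[simp]: "length (kron u v) = length u * length v"
  unfolding kron_def by (induction u) auto

lemma kron_Cons: "kron (x # u) v = map (\<lambda>y. x * y) v @ kron u v"
  unfolding kron_def by simp

lemma ext_append: "ext (xs @ ys) n = ext xs n + ext ys (n - int (length xs))"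
  unfolding ext_def by (auto simp: nth_append nat_diff_distrib)

lemma sum_shift1:
  fixes g :: "int \<Rightarrow> real"
  assumes that: "0 \<le> L"
  shows "(\<Sum>i\<in>{0..<L+1}. g i) = g 0 + (\<Sum>i\<in>{0..<L}. g (i + 1))"
proof -
  have "{0..<L+1} = insert 0 {1..<L+1}" using that by auto
  hence "(\<Sum>i\<in>{0..<L+1}. g i) = g 0 + (\<Sum>i\<in>{1..<L+1}. g i)" by simp
  also have "(\<Sum>i\<in>{1..<L+1}. g i) = (\<Sum>i\<in>{0..<L}. g (i + 1))"
    by (rule sum.reindex_bij_witness[of _ "\<lambda>i. i + 1" "\<lambda>i. i - 1"]) auto
  finally show ?thesis .
qed

lemma ext_kron:
  "ext (kron u v) n = (\<Sum>i\<in>{0..<int (length u)}. ext u i * ext v (n - i * int (length v)))"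
proof (induction u arbitrary: n)
  case Nil
  then show ?case by (simp add: kron_def ext_def)
next
  case (Cons x u)
  have e0: "ext (map (\<lambda>y. x * y) v) n = x * ext v n" unfolding ext_def by auto
  have "ext (kron (x # u) v) n = x * ext v n + ext (kron u v) (n - int (length v))"
    by (simp add: kron_Cons ext_append e0)
  also have "\<dots> = x * ext v n + (\<Sum>i\<in>{0..<int (length u)}. ext u i * ext v (n - int (length v) - i * int (length v)))"
    using Cons by simp
  also have "\<dots> = (\<Sum>i\<in>{0..<int (length u) + 1}. ext (x # u) i * ext v (n - i * int (length v)))"
    apply (subst sum_shift1, simp)
    apply (rule arg_cong2[where f="(+)"])
    apply (simp add: ext_def)
    apply (rule sum.cong, simp)
    apply (auto simp: ext_def algebra_simps nat_add_distrib)
    done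
  finally show ?case by (simp add: add.commute)
qed

lemma ext_vadd: "length u = length v \<Longrightarrow> ext (vadd u v) k = ext u k + ext v k"
  unfolding ext_def vadd_def by auto
lemma ext_vsub: "length u = length v \<Longrightarrow> ext (vsub u v) k = ext u k - ext v k"
  unfolding ext_def vsub_def by auto
lemma ext_vscale: "ext (vscale r u) k = r * ext u k"
  unfolding ext_def vscale_def by auto
lemma length_vadd[simp]: "length (vadd u v) = min (length u) (length v)"
  unfolding vadd_def by simp
lemma length_vsub[simp]: "length (vsub u v) = min (length u) (length v)"
  unfolding vsub_def by simp
lemma length_vscale[simp]: "length (vscale r u) = length u"
  unfolding vscale_def by simp
lemma ext_rev: "ext (rev u) k = ext u (int (length u) - 1 - k)"
  unfolding ext_def by (auto simp: rev_nth nat_diff_distrib)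

lemma ext_zero: "\<not> (0 \<le> k \<and> k < int (length u)) \<Longrightarrow> ext u k = 0"
  unfolding ext_def by auto


lemma shift_sum:
  fixes g :: "int \<Rightarrow> real" and N M :: nat
  assumes i: "0 \<le> i" "i < int N"
    and supp: "\<And>x. x < 0 \<or> x \<ge> int M \<Longrightarrow> g x = 0"
  shows "(\<Sum>k\<in>{0..<int (N*M)}. g (k - i * int M)) = (\<Sum>r\<in>{0..<int M}. g r)"
proof -
  have sub: "{i * int M..<i * int M + int M} \<subseteq> {0..<int (N*M)}"
  proof -
    have "(i+1) * int M \<le> int N * int M" using i by (intro mult_right_mono) auto
    thus ?thesis using i by (auto simp: algebra_simps)
  qed
  have "(\<Sum>k\<in>{0..<int (N*M)}. g (k - i * int M)) = (\<Sum>k\<in>{i * int M..<i * int M + int M}. g (k - i * int M))"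
    apply (rule sum.mono_neutral_right)
      apply simp
     apply (rule sub)
    using supp by force
  also have "\<dots> = (\<Sum>r\<in>{0..<int M}. g r)"
    by (rule sum.reindex_bij_witness[of _ "\<lambda>r. r + i * int M" "\<lambda>k. k - i * int M"]) auto
  finally show ?thesis .
qed

lemma swap3:
  fixes F :: "int \<Rightarrow> int \<Rightarrow> int \<Rightarrow> real"
  shows "(\<Sum>k\<in>K. \<Sum>i\<in>I. \<Sum>j\<in>J. F k i j) = (\<Sum>i\<in>I. \<Sum>j\<in>J. \<Sum>k\<in>K. F k i j)"
proof -
  have "(\<Sum>k\<in>K. \<Sum>i\<in>I. \<Sum>j\<in>J. F k i j) = (\<Sum>i\<in>I. \<Sum>k\<in>K. \<Sum>j\<in>J. F k i j)" by (rule sum.swap)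
  also have "\<dots> = (\<Sum>i\<in>I. \<Sum>j\<in>J. \<Sum>k\<in>K. F k i j)" by (rule sum.cong[OF refl], rule sum.swap)
  finally show ?thesis .
qed

lemma kron_cor:
  fixes U W :: "int \<Rightarrow> int \<Rightarrow> real" and N M :: nat
  assumes suppU: "\<And>i x. x < 0 \<or> x \<ge> int M \<Longrightarrow> U i x = 0"
  shows "cor (N*M) (\<lambda>k. \<Sum>i\<in>{0..<int N}. U i (k - i * int M)) (\<lambda>k. \<Sum>j\<in>{0..<int N}. W j (k - j * int M)) \<tau>
     = (\<Sum>i\<in>{0..<int N}. \<Sum>j\<in>{0..<int N}. cor M (U i) (W j) (\<tau> + (i - j) * int M))"
proof -
  have "cor (N*M) (\<lambda>k. \<Sum>i\<in>{0..<int N}. U i (k - i * int M)) (\<lambda>k. \<Sum>j\<in>{0..<int N}. W j (k - j * int M)) \<tau>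
     = (\<Sum>k\<in>{0..<int (N*M)}. \<Sum>i\<in>{0..<int N}. \<Sum>j\<in>{0..<int N}. U i (k - i * int M) * W j (k + \<tau> - j * int M))"
    unfolding cor_def by (simp add: sum_product)
  also have "\<dots> = (\<Sum>i\<in>{0..<int N}. \<Sum>j\<in>{0..<int N}. \<Sum>k\<in>{0..<int (N*M)}. U i (k - i * int M) * W j (k + \<tau> - j * int M))"
    by (rule swap3)
  also have "\<dots> = (\<Sum>i\<in>{0..<int N}. \<Sum>j\<in>{0..<int N}. cor M (U i) (W j) (\<tau> + (i - j) * int M))"
  proof (intro sum.cong refl)
    fix i j assume i: "i \<in> {0..<int N}"
    have "(\<Sum>k\<in>{0..<int (N*M)}. (\<lambda>x. U i x * W j (x + \<tau> + (i - j) * int M)) (k - i * int M))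
       = (\<Sum>r\<in>{0..<int M}. (\<lambda>x. U i x * W j (x + \<tau> + (i - j) * int M)) r)"
      apply (rule shift_sum) using i suppU by auto
    thus "(\<Sum>k\<in>{0..<int (N*M)}. U i (k - i * int M) * W j (k + \<tau> - j * int M)) = cor M (U i) (W j) (\<tau> + (i - j) * int M)"
      unfolding cor_def by (simp add: algebra_simps)
  qed
  finally show ?thesis .
qed

lemma refl_sum:
  fixes g :: "int \<Rightarrow> real"
  shows "(\<Sum>i\<in>{0..<int N}. g i) = (\<Sum>i\<in>{0..<int N}. g (int N - 1 - i))"
  by (rule sum.reindex_bij_witness[of _ "\<lambda>i. int N - 1 - i" "\<lambda>i. int N - 1 - i"]) auto

lemma sym_sum:
  fixes S D :: "int \<Rightarrow> int \<Rightarrow> real"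
  assumes "\<And>i j. i \<in> {0..<int N} \<Longrightarrow> j \<in> {0..<int N} \<Longrightarrow>
     S i j + S (int N - 1 - j) (int N - 1 - i) = D i j + D (int N - 1 - j) (int N - 1 - i)"
  shows "(\<Sum>i\<in>{0..<int N}. \<Sum>j\<in>{0..<int N}. S i j) = (\<Sum>i\<in>{0..<int N}. \<Sum>j\<in>{0..<int N}. D i j)"
proof -
  have R: "(\<Sum>i\<in>{0..<int N}. \<Sum>j\<in>{0..<int N}. F i j) = (\<Sum>i\<in>{0..<int N}. \<Sum>j\<in>{0..<int N}. F (int N - 1 - j) (int N - 1 - i))"
    for F :: "int \<Rightarrow> int \<Rightarrow> real"
  proof -
    have "(\<Sum>i\<in>{0..<int N}. \<Sum>j\<in>{0..<int N}. F i j) = (\<Sum>i\<in>{0..<int N}. \<Sum>j\<in>{0..<int N}. F (int N - 1 - i) (int N - 1 - j))"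
      by (subst refl_sum, subst (2) refl_sum, rule refl)
    also have "\<dots> = (\<Sum>j\<in>{0..<int N}. \<Sum>i\<in>{0..<int N}. F (int N - 1 - i) (int N - 1 - j))"
      by (rule sum.swap)
    finally show ?thesis .
  qed
  have "(\<Sum>i\<in>{0..<int N}. \<Sum>j\<in>{0..<int N}. S i j + S (int N - 1 - j) (int N - 1 - i)) =
     (\<Sum>i\<in>{0..<int N}. \<Sum>j\<in>{0..<int N}. S i j) + (\<Sum>i\<in>{0..<int N}. \<Sum>j\<in>{0..<int N}. S (int N - 1 - j) (int N - 1 - i))"
    by (simp add: sum.distrib)
  hence "2 * (\<Sum>i\<in>{0..<int N}. \<Sum>j\<in>{0..<int N}. S i j) = (\<Sum>i\<in>{0..<int N}. \<Sum>j\<in>{0..<int N}. S i j + S (int N - 1 - j) (int N - 1 - i))"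
    using R[of S] by simp
  also have "\<dots> = (\<Sum>i\<in>{0..<int N}. \<Sum>j\<in>{0..<int N}. D i j + D (int N - 1 - j) (int N - 1 - i))"
    using assms by (intro sum.cong refl) auto
  also have "\<dots> = (\<Sum>i\<in>{0..<int N}. \<Sum>j\<in>{0..<int N}. D i j) + (\<Sum>i\<in>{0..<int N}. \<Sum>j\<in>{0..<int N}. D (int N - 1 - j) (int N - 1 - i))"
    by (simp add: sum.distrib)
  also have "\<dots> = 2 * (\<Sum>i\<in>{0..<int N}. \<Sum>j\<in>{0..<int N}. D i j)"
    using R[of D] by simp
  finally show ?thesis by simp
qed


lemma delta_expand:
  fixes Q :: "int \<Rightarrow> real" and M :: nat
  assumes Qs: "\<And>x. x \<le> - int M \<or> x \<ge> int M \<Longrightarrow> Q x = 0"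
  shows "Q x = (\<Sum>r\<in>{- int M<..<int M}. if x = r then Q r else 0)"
proof (cases "- int M < x \<and> x < int M")
  case True thus ?thesis by (simp add: sum.delta)
next
  case False thus ?thesis using Qs[of x] by (auto simp: sum.delta)
qed

lemma inner_delta:
  fixes Y :: "int \<Rightarrow> real" and M N :: nat
  assumes M: "M > 0" and Ys: "\<And>j. \<not> (0 \<le> j \<and> j < int N) \<Longrightarrow> Y j = 0"
  shows "(\<Sum>j\<in>{0..<int N}. Y j * (if \<tau> + (i - j) * int M = r then q else 0))
       = (if int M dvd (\<tau> - r) then Y (i + (\<tau> - r) div int M) * q else 0)"
proof (cases "int M dvd (\<tau> - r)")
  case True
  then obtain p where p: "\<tau> - r = int M * p" by (auto elim: dvdE)
  have pd: "(\<tau> - r) div int M = p" using p M by simp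
  have eq: "(\<tau> + (i - j) * int M = r) \<longleftrightarrow> j = i + p" for j
  proof -
    have "(\<tau> + (i - j) * int M = r) \<longleftrightarrow> int M * (i + p - j) = 0" using p by (auto simp: algebra_simps)
    also have "\<dots> \<longleftrightarrow> j = i + p" using M by auto
    finally show ?thesis .
  qed
  have "(\<Sum>j\<in>{0..<int N}. Y j * (if \<tau> + (i - j) * int M = r then q else 0))
      = (\<Sum>j\<in>{0..<int N}. if j = i + p then Y j * q else 0)"
    by (rule sum.cong) (auto simp: eq)
  also have "\<dots> = Y (i + p) * q" using Ys[of "i+p"] by (auto simp: sum.delta')
  finally show ?thesis using True pd by simp
next
  case False
  have "\<tau> + (i - j) * int M \<noteq> r" for j
  proof
    assume "\<tau> + (i - j) * int M = r"
    hence "\<tau> - r = int M * (j - i)" by (auto simp: algebra_simps)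
    thus False using False by auto
  qed
  thus ?thesis using False by simp
qed

lemma group:
  fixes X Y Q :: "int \<Rightarrow> real" and M N :: nat
  assumes M: "M > 0"
    and Qs: "\<And>x. x \<le> - int M \<or> x \<ge> int M \<Longrightarrow> Q x = 0"
    and Ys: "\<And>j. \<not> (0 \<le> j \<and> j < int N) \<Longrightarrow> Y j = 0"
  shows "(\<Sum>i\<in>{0..<int N}. \<Sum>j\<in>{0..<int N}. X i * Y j * Q (\<tau> + (i - j) * int M))
    = (\<Sum>r\<in>{- int M<..<int M}. Q r * (if int M dvd (\<tau> - r) then cor N X Y ((\<tau> - r) div int M) else 0))"
proof -
  have "(\<Sum>i\<in>{0..<int N}. \<Sum>j\<in>{0..<int N}. X i * Y j * Q (\<tau> + (i - j) * int M))
     = (\<Sum>i\<in>{0..<int N}. \<Sum>j\<in>{0..<int N}. \<Sum>r\<in>{- int M<..<int M}. X i * (Y j * (if \<tau> + (i - j) * int M = r then Q r else 0)))"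
  proof (intro sum.cong refl)
    fix i j
    have dq: "Q (\<tau> + (i - j) * int M) = (\<Sum>r\<in>{- int M<..<int M}. if \<tau> + (i - j) * int M = r then Q r else 0)"
      by (rule delta_expand) (rule Qs)
    have "X i * Y j * Q (\<tau> + (i - j) * int M) = X i * (Y j * (\<Sum>r\<in>{- int M<..<int M}. if \<tau> + (i - j) * int M = r then Q r else 0))"
      using dq by (simp only: mult.assoc)
    thus "X i * Y j * Q (\<tau> + (i - j) * int M) = (\<Sum>r\<in>{- int M<..<int M}. X i * (Y j * (if \<tau> + (i - j) * int M = r then Q r else 0)))"
      by (simp only: sum_distrib_left)
  qed
  also have "\<dots> = (\<Sum>r\<in>{- int M<..<int M}. \<Sum>i\<in>{0..<int N}. X i * (\<Sum>j\<in>{0..<int N}. Y j * (if \<tau> + (i - j) * int M = r then Q r else 0)))"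
    by (subst swap3[symmetric]) (simp add: sum_distrib_left)
  also have "\<dots> = (\<Sum>r\<in>{- int M<..<int M}. \<Sum>i\<in>{0..<int N}. X i * (if int M dvd (\<tau> - r) then Y (i + (\<tau> - r) div int M) * Q r else 0))"
    apply (intro sum.cong refl)
    apply (subst inner_delta[where M=M and N=N and Y=Y])
    using M Ys by auto
  also have "\<dots> = (\<Sum>r\<in>{- int M<..<int M}. Q r * (if int M dvd (\<tau> - r) then cor N X Y ((\<tau> - r) div int M) else 0))"
    by (intro sum.cong refl) (auto simp: cor_def sum_distrib_left algebra_simps)
  finally show ?thesis .
qed

lemma cor_supp:
  fixes X Y :: "int \<Rightarrow> real"
  assumes Ys: "\<And>j. \<not> (0 \<le> j \<and> j < int L) \<Longrightarrow> Y j = 0"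
    and x: "x \<le> - int L \<or> x \<ge> int L"
  shows "cor L X Y x = 0"
  unfolding cor_def by (rule sum.neutral) (use Ys x in auto)

lemma cor_expand:
  "cor L (\<lambda>r. p * s r + q * t r) (\<lambda>r. p' * s r + q' * t r) x
   = p * p' * cor L s s x + p * q' * cor L s t x + q * p' * cor L t s x + q * q' * cor L t t x"
  unfolding cor_def by (simp add: sum.distrib sum_distrib_left algebra_simps)


lemma bin_facts:
  fixes x y :: real
  assumes "x = 1 \<or> x = -1" "y = 1 \<or> y = -1"
  shows "x * y = 1 \<longleftrightarrow> x - y = 0" "x * y = -1 \<longleftrightarrow> x + y = 0"
    "x * y = 1 \<or> x * y = -1"
  using assms by auto

lemma core:
  fixes c d :: "nat \<Rightarrow> real" and N Z :: nat
  assumes ZN: "Z < N"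
    and bin: "\<And>k. k < N \<Longrightarrow> (c k = 1 \<or> c k = -1) \<and> (d k = 1 \<or> d k = -1)"
    and A: "\<And>m. m < Z \<Longrightarrow> (\<Sum>k=0..m. (c k + d k) * (c (k + (N-1-m)) + d (k + (N-1-m)))) = 0"
    and B: "\<And>m. m < Z \<Longrightarrow> (\<Sum>k=0..m. (c k - d k) * (c (k + (N-1-m)) - d (k + (N-1-m)))) = 0"
    and w0: "c 0 * d 0 = 1"
  shows "m < Z \<Longrightarrow> c m * d m = 1 \<and> c (N-1-m) * d (N-1-m) = -1"
proof (induction m rule: less_induct)
  case (less m)
  have u0: "c 0 + d 0 \<noteq> 0" using w0 bin[of 0] ZN by auto
  have suf: "c (N-1-m) * d (N-1-m) = -1"
  proof -
    have "(\<Sum>k=0..m. (c k + d k) * (c (k + (N-1-m)) + d (k + (N-1-m))))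
        = (c 0 + d 0) * (c (N-1-m) + d (N-1-m)) + (\<Sum>k=Suc 0..m. (c k + d k) * (c (k + (N-1-m)) + d (k + (N-1-m))))"
      by (simp add: sum.atLeast_Suc_atMost)
    also have "(\<Sum>k=Suc 0..m. (c k + d k) * (c (k + (N-1-m)) + d (k + (N-1-m)))) = 0"
    proof (rule sum.neutral, rule ballI)
      fix k assume k: "k \<in> {Suc 0..m}"
      have e: "k + (N-1-m) = N-1-(m-k)" using k less.prems ZN by auto
      have "c (N-1-(m-k)) * d (N-1-(m-k)) = -1" using less.IH[of "m-k"] k less.prems by auto
      hence "c (N-1-(m-k)) + d (N-1-(m-k)) = 0"
        using bin[of "N-1-(m-k)"] ZN by auto
      thus "(c k + d k) * (c (k + (N-1-m)) + d (k + (N-1-m))) = 0" using e by simp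
    qed
    finally have "(c 0 + d 0) * (c (N-1-m) + d (N-1-m)) = 0" using A[OF less.prems] by simp
    hence "c (N-1-m) + d (N-1-m) = 0" using u0 by simp
    thus ?thesis using bin[of "N-1-m"] ZN by auto
  qed
  have pre: "c m * d m = 1"
  proof (cases m)
    case 0 thus ?thesis using w0 by simp
  next
    case (Suc m')
    have "(\<Sum>k=0..m. (c k - d k) * (c (k + (N-1-m)) - d (k + (N-1-m))))
        = (\<Sum>k=0..m'. (c k - d k) * (c (k + (N-1-m)) - d (k + (N-1-m)))) + (c m - d m) * (c (N-1) - d (N-1))"
      using Suc less.prems ZN by (simp add: sum.atLeast0_atMost_Suc)
    also have "(\<Sum>k=0..m'. (c k - d k) * (c (k + (N-1-m)) - d (k + (N-1-m)))) = 0"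
    proof (rule sum.neutral, rule ballI)
      fix k assume k: "k \<in> {0..m'}"
      have "c k * d k = 1" using less.IH[of k] k Suc less.prems by auto
      hence "c k - d k = 0" using bin[of k] k Suc less.prems ZN by auto
      thus "(c k - d k) * (c (k + (N-1-m)) - d (k + (N-1-m))) = 0" by simp
    qed
    finally have "(c m - d m) * (c (N-1) - d (N-1)) = 0" using B[OF less.prems] by simp
    moreover have "c (N-1) * d (N-1) = -1" using less.IH[of 0] Suc less.prems by auto
    hence "c (N-1) - d (N-1) \<noteq> 0" using bin[of "N-1"] ZN by auto
    ultimately have "c m - d m = 0" by simp
    thus ?thesis using bin[of m] less.prems ZN by auto
  qed
  show ?case using suf pre by simp
qed


lemma sum_int_nat:
  fixes g :: "int \<Rightarrow> real"
  shows "(\<Sum>k\<in>{0..int m}. g k) = (\<Sum>k\<in>{0..m}. g (int k))"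
  by (rule sum.reindex_bij_witness[of _ int nat]) auto

lemma acorr_pos:
  fixes a b :: "real list"
  assumes "length a = N" "m < N"
  shows "acorr a b (int (N - 1 - m)) = (\<Sum>k=0..m. a ! k * b ! (k + (N - 1 - m)))"
proof -
  have "acorr a b (int (N - 1 - m)) = (\<Sum>k\<in>{0..int m}. a ! nat k * b ! nat (k + int (N - 1 - m)))"
    using assms unfolding acorr_def Let_def by (auto simp: of_nat_diff)
  also have "\<dots> = (\<Sum>k=0..m. a ! k * b ! (k + (N - 1 - m)))"
    by (subst sum_int_nat) (simp add: nat_add_distrib)
  finally show ?thesis .
qed

lemma SL_aux:
  fixes c d :: "real list" and N Z :: nat
  assumes cz: "binary_CZCP c d N Z" and N: "N > 0"
  shows "Z < N \<and> (\<exists>l. (\<forall>m<Z. c ! m * d ! m = l \<and> c ! (N-1-m) * d ! (N-1-m) = - l))"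
proof -
  have lc: "length c = N" and ld: "length d = N"
    and auto_c: "\<And>\<tau>. \<bar>\<tau>\<bar> \<in> {1..int Z} \<union> {int N - int Z..int N - 1} \<Longrightarrow> aacorr c \<tau> + aacorr d \<tau> = 0"
    and cross: "\<And>\<tau>. \<bar>\<tau>\<bar> \<in> {int N - int Z..int N - 1} \<Longrightarrow> acorr c d \<tau> + acorr d c \<tau> = 0"
    using cz unfolding binary_CZCP_def CZCP_def Let_def by auto
  have bin: "\<And>k. k < N \<Longrightarrow> (c ! k = 1 \<or> c ! k = -1) \<and> (d ! k = 1 \<or> d ! k = -1)"
    using cz lc ld unfolding binary_CZCP_def binary_def by (auto simp: nth_mem)
  have ZN: "Z < N"
  proof (rule ccontr)
    assume "\<not> Z < N"
    hence "aacorr c 0 + aacorr d 0 = 0" using auto_c[of 0] N by auto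
    moreover have "aacorr c 0 = (\<Sum>k=0..N-1. c ! k * c ! k)" and "aacorr d 0 = (\<Sum>k=0..N-1. d ! k * d ! k)"
      using acorr_pos[OF lc, of "N-1" c] acorr_pos[OF ld, of "N-1" d] N by auto
    moreover have "(\<Sum>k=0..N-1. c ! k * c ! k) = (\<Sum>k=0..N-1. 1)"
    proof (rule sum.cong[OF refl])
      fix k assume "k \<in> {0..N-1}"
      hence "k < N" using N by auto
      thus "c ! k * c ! k = 1" using bin[of k] by auto
    qed
    moreover have "(\<Sum>k=0..N-1. d ! k * d ! k) = (\<Sum>k=0..N-1. 1)"
    proof (rule sum.cong[OF refl])
      fix k assume "k \<in> {0..N-1}"
      hence "k < N" using N by auto
      thus "d ! k * d ! k = 1" using bin[of k] by auto
    qed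
    ultimately show False using N by simp
  qed
  have A0: "(\<Sum>k=0..m. (c ! k + d ! k) * (c ! (k + (N-1-m)) + d ! (k + (N-1-m)))) = 0"
   and B0: "(\<Sum>k=0..m. (c ! k - d ! k) * (c ! (k + (N-1-m)) - d ! (k + (N-1-m)))) = 0" if m: "m < Z" for m
  proof -
    have T: "\<bar>int (N - 1 - m)\<bar> \<in> {int N - int Z..int N - 1}" using m ZN by auto
    have "aacorr c (int (N - 1 - m)) + aacorr d (int (N - 1 - m)) = 0" using auto_c T by auto
    hence 1: "(\<Sum>k=0..m. c ! k * c ! (k + (N-1-m)) + d ! k * d ! (k + (N-1-m))) = 0"
      using acorr_pos[OF lc, of m c] acorr_pos[OF ld, of m d] m ZN by (simp add: sum.distrib)
    have "acorr c d (int (N - 1 - m)) + acorr d c (int (N - 1 - m)) = 0" using cross T by auto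
    hence 2: "(\<Sum>k=0..m. c ! k * d ! (k + (N-1-m)) + d ! k * c ! (k + (N-1-m))) = 0"
      using acorr_pos[OF lc, of m d] acorr_pos[OF ld, of m c] m ZN by (simp add: sum.distrib)
    have "(\<Sum>k=0..m. (c ! k + d ! k) * (c ! (k + (N-1-m)) + d ! (k + (N-1-m))))
       = (\<Sum>k=0..m. c ! k * c ! (k + (N-1-m)) + d ! k * d ! (k + (N-1-m))) + (\<Sum>k=0..m. c ! k * d ! (k + (N-1-m)) + d ! k * c ! (k + (N-1-m)))"
      by (simp add: sum.distrib[symmetric] algebra_simps)
    thus "(\<Sum>k=0..m. (c ! k + d ! k) * (c ! (k + (N-1-m)) + d ! (k + (N-1-m)))) = 0" using 1 2 by simp
    have "(\<Sum>k=0..m. (c ! k - d ! k) * (c ! (k + (N-1-m)) - d ! (k + (N-1-m))))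
       = (\<Sum>k=0..m. c ! k * c ! (k + (N-1-m)) + d ! k * d ! (k + (N-1-m))) - (\<Sum>k=0..m. c ! k * d ! (k + (N-1-m)) + d ! k * c ! (k + (N-1-m)))"
      by (simp add: sum_subtractf[symmetric] algebra_simps)
    thus "(\<Sum>k=0..m. (c ! k - d ! k) * (c ! (k + (N-1-m)) - d ! (k + (N-1-m)))) = 0" using 1 2 by simp
  qed
  show ?thesis
  proof (cases "c ! 0 * d ! 0 = 1")
    case True
    have "\<forall>m<Z. c ! m * d ! m = 1 \<and> c ! (N-1-m) * d ! (N-1-m) = - 1"
      using core[of Z N "\<lambda>k. c ! k" "\<lambda>k. d ! k", OF ZN bin A0 B0 True] by blast
    thus ?thesis using ZN by blast
  next
    case False
    hence w: "c ! 0 * (- d ! 0) = 1" using bin[of 0] N by auto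
    have "\<forall>m<Z. c ! m * (- d ! m) = 1 \<and> c ! (N-1-m) * (- d ! (N-1-m)) = - 1"
      using core[of Z N "\<lambda>k. c ! k" "\<lambda>k. - d ! k", OF ZN _ _ _ w] bin B0 A0 by fastforce
    hence "\<forall>m<Z. c ! m * d ! m = -1 \<and> c ! (N-1-m) * d ! (N-1-m) = - (-1)" by auto
    thus ?thesis using ZN by blast
  qed
qed


lemma SL:
  assumes cz: "binary_CZCP c d N Z"
    and i: "0 \<le> i" "i < int N" and k: "0 \<le> k" "k < int N"
    and pos: "(i < int Z \<and> k < int Z) \<or> (int N - int Z \<le> i \<and> int N - int Z \<le> k)"
  shows "ext c i * ext c k = ext d i * ext d k"
proof -
  have N: "N > 0" using i by auto
  obtain l where ZN: "Z < N" and l: "\<forall>m<Z. c ! m * d ! m = l \<and> c ! (N-1-m) * d ! (N-1-m) = - l"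
    using SL_aux[OF cz N] by blast
  have lc: "length c = N" and ld: "length d = N" using cz unfolding binary_CZCP_def CZCP_def by auto
  have bin: "\<And>k. k < N \<Longrightarrow> (c ! k = 1 \<or> c ! k = -1) \<and> (d ! k = 1 \<or> d ! k = -1)"
    using cz lc ld unfolding binary_CZCP_def binary_def by (auto simp: nth_mem)
  have w: "c ! nat i * d ! nat i = c ! nat k * d ! nat k"
  proof (cases "i < int Z \<and> k < int Z")
    case True
    thus ?thesis using l i k by (metis nat_less_iff)
  next
    case False
    hence P: "int N - int Z \<le> i \<and> int N - int Z \<le> k" using pos by auto
    have i': "N-1-(N-1-nat i) = nat i" "N-1-nat i < Z" using P i ZN by auto
    have k': "N-1-(N-1-nat k) = nat k" "N-1-nat k < Z" using P k ZN by auto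
    show ?thesis using l i' k' by metis
  qed
  have bi: "(c ! nat i = 1 \<or> c ! nat i = -1) \<and> (d ! nat i = 1 \<or> d ! nat i = -1)"
    using bin[of "nat i"] i by auto
  have bk: "(c ! nat k = 1 \<or> c ! nat k = -1) \<and> (d ! nat k = 1 \<or> d ! nat k = -1)"
    using bin[of "nat k"] k by auto
  have "c ! nat i * c ! nat k = d ! nat i * d ! nat k"
    using w bi bk by auto
  thus ?thesis using i k lc ld unfolding ext_def by simp
qed

lemma cancel_M:
  fixes x y :: int and M :: nat
  assumes "M > 0" "x * int M < y * int M"
  shows "x < y"
  using assms by (simp add: mult_less_cancel_right)

lemma idx:
  fixes \<tau> i j :: int and M N Z :: nat
  assumes M: "M > 0"
    and T: "\<bar>\<tau>\<bar> \<in> {int (N*M) - int (Z*M)..int (N*M) - 1}"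
    and x: "- int M < \<tau> + (i - j) * int M" "\<tau> + (i - j) * int M < int M"
  shows "(0 \<le> \<tau> \<longrightarrow> i - j \<le> int Z - int N) \<and> (\<tau> < 0 \<longrightarrow> i - j \<ge> int N - int Z)"
proof (intro conjI impI)
  assume "0 \<le> \<tau>"
  hence "(i - j) * int M < (1 + int Z - int N) * int M" using T x by (auto simp: algebra_simps)
  thus "i - j \<le> int Z - int N" using cancel_M[OF M] by fastforce
next
  assume "\<tau> < 0"
  hence "(int N - int Z - 1) * int M < (i - j) * int M" using T x by (auto simp: algebra_simps)
  thus "i - j \<ge> int N - int Z" using cancel_M[OF M] by fastforce
qed

lemma pbound:
  fixes \<tau> r p :: int and M N Z :: nat
  assumes M: "M > 0"
    and T: "\<bar>\<tau>\<bar> \<in> {int (N*M) - int (Z*M)..int (N*M) - 1}"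
    and r: "- int M < r" "r < int M" and p: "\<tau> - r = p * int M"
  shows "int N - int Z \<le> \<bar>p\<bar>"
proof -
  have "\<bar>p\<bar> * int M = \<bar>\<tau> - r\<bar>" using p by (simp add: abs_mult)
  also have "\<dots> > (int N - int Z - 1) * int M" using T r by (auto simp: algebra_simps)
  finally show ?thesis using cancel_M[OF M] by fastforce
qed

lemma pset:
  fixes \<tau> p :: int and M N Z :: nat
  assumes M: "M > 0"
    and T: "\<bar>\<tau>\<bar> \<in> {1..int (Z*M)} \<union> {int (N*M) - int (Z*M)..int (N*M) - 1}"
    and p: "\<tau> = p * int M"
  shows "\<bar>p\<bar> \<in> {1..int Z} \<union> {int N - int Z..int N - 1}"
proof -
  have e: "\<bar>\<tau>\<bar> = \<bar>p\<bar> * int M" using p by (simp add: abs_mult)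
  have "1 \<le> \<bar>p\<bar> \<and> \<bar>p\<bar> \<le> int Z \<or> int N - int Z \<le> \<bar>p\<bar> \<and> \<bar>p\<bar> \<le> int N - 1"
  proof (cases "\<bar>\<tau>\<bar> \<in> {1..int (Z*M)}")
    case True
    have h: "1 \<le> \<bar>p\<bar> * int M" "\<bar>p\<bar> * int M \<le> int Z * int M" using True e by auto
    hence "\<bar>p\<bar> \<le> int Z" using M by (simp add: mult_le_cancel_right)
    moreover have "\<bar>p\<bar> \<noteq> 0" using h by auto
    ultimately show ?thesis by auto
  next
    case False
    hence h: "\<bar>\<tau>\<bar> \<in> {int (N*M) - int (Z*M)..int (N*M) - 1}" using T by auto
    have "(int N - int Z - 1) * int M < \<bar>p\<bar> * int M" using e M h by (auto simp: algebra_simps)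
    moreover have "\<bar>p\<bar> * int M < int N * int M" using e h by auto
    ultimately have "(int N - int Z - 1) * int M < \<bar>p\<bar> * int M" "\<bar>p\<bar> * int M < int N * int M" by auto
    hence "int N - int Z - 1 < \<bar>p\<bar>" "\<bar>p\<bar> < int N" using cancel_M[OF M] by blast+
    thus ?thesis by auto
  qed
  thus ?thesis by auto
qed


lemma Q_ss_tt:
  assumes "length a = length b"
  shows "cor M (ext (vscale (1/2) (vadd a b))) (ext (vscale (1/2) (vadd a b))) r
       + cor M (ext (vscale (1/2) (vsub b a))) (ext (vscale (1/2) (vsub b a))) r
       = (cor M (ext a) (ext a) r + cor M (ext b) (ext b) r) / 2"
  using assms unfolding cor_def
  by (simp add: ext_vscale ext_vadd ext_vsub sum.distrib[symmetric] sum_divide_distrib add_divide_distrib algebra_simps)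

theorem theorem6:
  fixes a b c d :: "real list" and M N Z :: nat
  assumes gcp: "binary_GCP a b M"
    and cz: "binary_CZCP c d N Z"
  shows "CZCP (turyn_e a b c d) (turyn_f a b c d) (N * M) (Z * M)"
proof -
  have la: "length a = M" and lb: "length b = M" and g: "\<And>\<tau>. \<tau> \<noteq> 0 \<Longrightarrow> aacorr a \<tau> + aacorr b \<tau> = 0"
    using gcp unfolding binary_GCP_def GCP_def by auto
  have lc: "length c = N" and ld: "length d = N"
    and auto_c: "\<And>\<tau>. \<bar>\<tau>\<bar> \<in> {1..int Z} \<union> {int N - int Z..int N - 1} \<Longrightarrow> aacorr c \<tau> + aacorr d \<tau> = 0"
    and cross: "\<And>\<tau>. \<bar>\<tau>\<bar> \<in> {int N - int Z..int N - 1} \<Longrightarrow> acorr c d \<tau> + acorr d c \<tau> = 0"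
    using cz unfolding binary_CZCP_def CZCP_def Let_def by auto
  show ?thesis
  proof (cases "M = 0")
    case True
    hence "a = []" "b = []" using la lb by auto
    hence "turyn_e a b c d = []" "turyn_f a b c d = []"
      unfolding turyn_e_def turyn_f_def kron_def vsub_def vadd_def vscale_def by auto
    thus ?thesis using True unfolding CZCP_def acorr_def by simp
  next
    case False
    hence M: "M > 0" by simp
    define s where "s = ext (vscale (1/2) (vadd a b))"
    define t where "t = ext (vscale (1/2) (vsub b a))"
    define C where "C = ext c"
    define D where "D = ext d"
    define U where "U = (\<lambda>i r. C i * s r + (- D (int N - 1 - i)) * t r)"
    define V where "V = (\<lambda>i r. D i * s r + C (int N - 1 - i) * t r)"
    have le: "length (turyn_e a b c d) = N * M" and lf: "length (turyn_f a b c d) = N * M"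
      unfolding turyn_e_def turyn_f_def using la lb lc ld by auto
    have ee: "ext (turyn_e a b c d) = (\<lambda>k. \<Sum>i\<in>{0..<int N}. U i (k - i * int M))"
    proof
      fix k
      show "ext (turyn_e a b c d) k = (\<Sum>i\<in>{0..<int N}. U i (k - i * int M))"
        unfolding turyn_e_def U_def s_def t_def C_def D_def
        using la lb lc ld
        by (simp add: ext_vsub ext_kron ext_rev sum_subtractf[symmetric])
    qed
    have ef: "ext (turyn_f a b c d) = (\<lambda>k. \<Sum>i\<in>{0..<int N}. V i (k - i * int M))"
    proof
      fix k
      show "ext (turyn_f a b c d) k = (\<Sum>i\<in>{0..<int N}. V i (k - i * int M))"
        unfolding turyn_f_def V_def s_def t_def C_def D_def
        using la lb lc ld
        by (simp add: ext_vadd ext_kron ext_rev sum.distrib[symmetric])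
    qed
    have ls: "length (vscale (1/2) (vadd a b)) = M" "length (vscale (1/2) (vsub b a)) = M"
      using la lb by auto
    have ssupp: "s x = 0" "t x = 0" if "x < 0 \<or> x \<ge> int M" for x
      unfolding s_def t_def using that ls by (auto intro: ext_zero)
    have ssupp': "s x = 0" "t x = 0" if "x \<le> - int M \<or> x \<ge> int M" for x
      using ssupp that M by auto
    have Usupp: "U i x = 0" "V i x = 0" if "x < 0 \<or> x \<ge> int M" for i x
      unfolding U_def V_def using ssupp[OF that] by auto
    have Csupp: "C j = 0" "D j = 0" if "\<not> (0 \<le> j \<and> j < int N)" for j
      unfolding C_def D_def using that lc ld by (auto intro: ext_zero)
    have KC: "cor (N*M) (\<lambda>k. \<Sum>i\<in>{0..<int N}. X i (k - i * int M)) (\<lambda>k. \<Sum>j\<in>{0..<int N}. Y j (k - j * int M)) \<tau>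
       = (\<Sum>i\<in>{0..<int N}. \<Sum>j\<in>{0..<int N}. cor M (X i) (Y j) (\<tau> + (i - j) * int M))"
      if "X = U \<or> X = V" for X Y \<tau>
      by (rule kron_cor) (use that Usupp in auto)
    have cE: "acorr (turyn_e a b c d) (turyn_e a b c d) \<tau> = (\<Sum>i\<in>{0..<int N}. \<Sum>j\<in>{0..<int N}. cor M (U i) (U j) (\<tau> + (i - j) * int M))"
     and cF: "acorr (turyn_f a b c d) (turyn_f a b c d) \<tau> = (\<Sum>i\<in>{0..<int N}. \<Sum>j\<in>{0..<int N}. cor M (V i) (V j) (\<tau> + (i - j) * int M))"
     and cEF: "acorr (turyn_e a b c d) (turyn_f a b c d) \<tau> = (\<Sum>i\<in>{0..<int N}. \<Sum>j\<in>{0..<int N}. cor M (U i) (V j) (\<tau> + (i - j) * int M))"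
     and cFE: "acorr (turyn_f a b c d) (turyn_e a b c d) \<tau> = (\<Sum>i\<in>{0..<int N}. \<Sum>j\<in>{0..<int N}. cor M (V i) (U j) (\<tau> + (i - j) * int M))"
     for \<tau>
      using acorr_cor le lf ee ef KC by auto
    define Q where "Q = (\<lambda>r. cor M s s r + cor M t t r)"
    have corz: "cor M X s x = 0" "cor M X t x = 0" if "x \<le> - int M \<or> x \<ge> int M" for X x
      using that by (auto intro!: cor_supp ssupp)
    have Qs: "Q x = 0" if "x \<le> - int M \<or> x \<ge> int M" for x
      unfolding Q_def using corz[OF that] by simp
    have Qr: "Q r = 0" if "r \<noteq> 0" for r
    proof -
      have "Q r = (cor M (ext a) (ext a) r + cor M (ext b) (ext b) r) / 2"
        unfolding Q_def s_def t_def using Q_ss_tt la lb by simp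
      also have "\<dots> = (aacorr a r + aacorr b r) / 2" using acorr_cor la lb by simp
      finally show ?thesis using g[OF that] by simp
    qed
    have AUTO: "aacorr (turyn_e a b c d) \<tau> + aacorr (turyn_f a b c d) \<tau> = 0"
      if T: "\<bar>\<tau>\<bar> \<in> {1..int (Z*M)} \<union> {int (N*M) - int (Z*M)..int (N*M) - 1}" for \<tau>
    proof -
      have "aacorr (turyn_e a b c d) \<tau> + aacorr (turyn_f a b c d) \<tau>
          = (\<Sum>i\<in>{0..<int N}. \<Sum>j\<in>{0..<int N}. cor M (U i) (U j) (\<tau> + (i - j) * int M) + cor M (V i) (V j) (\<tau> + (i - j) * int M))"
        unfolding cE cF by (simp add: sum.distrib)
      also have "\<dots> = (\<Sum>i\<in>{0..<int N}. \<Sum>j\<in>{0..<int N}. C i * C j * Q (\<tau> + (i - j) * int M) + D i * D j * Q (\<tau> + (i - j) * int M))"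
        apply (rule sym_sum)
        unfolding U_def V_def Q_def cor_expand
        by (simp add: algebra_simps)
      also have "\<dots> = (\<Sum>i\<in>{0..<int N}. \<Sum>j\<in>{0..<int N}. C i * C j * Q (\<tau> + (i - j) * int M))
                    + (\<Sum>i\<in>{0..<int N}. \<Sum>j\<in>{0..<int N}. D i * D j * Q (\<tau> + (i - j) * int M))"
        by (simp add: sum.distrib)
      also have "\<dots> = (\<Sum>r\<in>{- int M<..<int M}. Q r * (if int M dvd (\<tau> - r) then cor N C C ((\<tau> - r) div int M) else 0))
                    + (\<Sum>r\<in>{- int M<..<int M}. Q r * (if int M dvd (\<tau> - r) then cor N D D ((\<tau> - r) div int M) else 0))"
        using group[of M Q N C C \<tau>] group[of M Q N D D \<tau>] M Qs Csupp by auto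
      also have "\<dots> = (\<Sum>r\<in>{- int M<..<int M}. Q r * (if int M dvd (\<tau> - r) then cor N C C ((\<tau> - r) div int M) + cor N D D ((\<tau> - r) div int M) else 0))"
        by (simp only: sum.distrib[symmetric], rule sum.cong[OF refl], simp add: distrib_left)
      also have "\<dots> = 0"
      proof (rule sum.neutral, rule ballI)
        fix r assume r: "r \<in> {- int M<..<int M}"
        show "Q r * (if int M dvd (\<tau> - r) then cor N C C ((\<tau> - r) div int M) + cor N D D ((\<tau> - r) div int M) else 0) = 0"
        proof (cases "r = 0 \<and> int M dvd \<tau>")
          case True
          then obtain p where p: "\<tau> = p * int M" by (metis dvdE mult.commute)
          have pd: "\<tau> div int M = p" using p M by simp
          have "\<bar>p\<bar> \<in> {1..int Z} \<union> {int N - int Z..int N - 1}" by (rule pset[OF M T p])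
          hence "aacorr c p + aacorr d p = 0" by (rule auto_c)
          hence "cor N C C p + cor N D D p = 0" using acorr_cor lc ld unfolding C_def D_def by simp
          thus ?thesis using True pd by simp
        next
          case False
          thus ?thesis using Qr by (cases "r = 0") auto
        qed
      qed
      finally show ?thesis .
    qed
    define Q' where "Q' = (\<lambda>r. cor M s s r - cor M t t r)"
    have Qs': "Q' x = 0" if "x \<le> - int M \<or> x \<ge> int M" for x
      unfolding Q'_def using corz[OF that] by simp
    have SLC: "C i * C k = D i * D k" if "0 \<le> i" "i < int N" "0 \<le> k" "k < int N"
      "(i < int Z \<and> k < int Z) \<or> (int N - int Z \<le> i \<and> int N - int Z \<le> k)" for i k
      unfolding C_def D_def by (rule SL[OF cz that])
    have CROSS: "acorr (turyn_e a b c d) (turyn_f a b c d) \<tau> + acorr (turyn_f a b c d) (turyn_e a b c d) \<tau> = 0"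
      if T: "\<bar>\<tau>\<bar> \<in> {int (N*M) - int (Z*M)..int (N*M) - 1}" for \<tau>
    proof -
      have "acorr (turyn_e a b c d) (turyn_f a b c d) \<tau> + acorr (turyn_f a b c d) (turyn_e a b c d) \<tau>
          = (\<Sum>i\<in>{0..<int N}. \<Sum>j\<in>{0..<int N}. cor M (U i) (V j) (\<tau> + (i - j) * int M) + cor M (V i) (U j) (\<tau> + (i - j) * int M))"
        unfolding cEF cFE by (simp add: sum.distrib)
      also have "\<dots> = (\<Sum>i\<in>{0..<int N}. \<Sum>j\<in>{0..<int N}.
             C i * D j * Q' (\<tau> + (i - j) * int M) + D i * C j * Q' (\<tau> + (i - j) * int M)
           + ((C i * C (int N - 1 - j) - D i * D (int N - 1 - j)) * cor M s t (\<tau> + (i - j) * int M)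
           + (C (int N - 1 - i) * C j - D (int N - 1 - i) * D j) * cor M t s (\<tau> + (i - j) * int M)))"
        apply (rule sym_sum)
        unfolding U_def V_def Q'_def cor_expand
        by (simp add: algebra_simps)
      also have "\<dots> = (\<Sum>i\<in>{0..<int N}. \<Sum>j\<in>{0..<int N}. C i * D j * Q' (\<tau> + (i - j) * int M))
                    + (\<Sum>i\<in>{0..<int N}. \<Sum>j\<in>{0..<int N}. D i * C j * Q' (\<tau> + (i - j) * int M))
                    + (\<Sum>i\<in>{0..<int N}. \<Sum>j\<in>{0..<int N}.
             ((C i * C (int N - 1 - j) - D i * D (int N - 1 - j)) * cor M s t (\<tau> + (i - j) * int M)
           + (C (int N - 1 - i) * C j - D (int N - 1 - i) * D j) * cor M t s (\<tau> + (i - j) * int M)))"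
        by (simp add: sum.distrib)
      also have "(\<Sum>i\<in>{0..<int N}. \<Sum>j\<in>{0..<int N}.
             ((C i * C (int N - 1 - j) - D i * D (int N - 1 - j)) * cor M s t (\<tau> + (i - j) * int M)
           + (C (int N - 1 - i) * C j - D (int N - 1 - i) * D j) * cor M t s (\<tau> + (i - j) * int M))) = 0"
      proof (intro sum.neutral ballI)
        fix i j assume i: "i \<in> {0..<int N}" and j: "j \<in> {0..<int N}"
        show "(C i * C (int N - 1 - j) - D i * D (int N - 1 - j)) * cor M s t (\<tau> + (i - j) * int M)
           + (C (int N - 1 - i) * C j - D (int N - 1 - i) * D j) * cor M t s (\<tau> + (i - j) * int M) = 0"
        proof (cases "- int M < \<tau> + (i - j) * int M \<and> \<tau> + (i - j) * int M < int M")
          case True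
          have id: "(0 \<le> \<tau> \<longrightarrow> i - j \<le> int Z - int N) \<and> (\<tau> < 0 \<longrightarrow> i - j \<ge> int N - int Z)"
            using idx[OF M T] True by blast
          have "C i * C (int N - 1 - j) = D i * D (int N - 1 - j)"
            by (rule SLC) (use i j id in \<open>auto split: if_splits\<close>)
          moreover have "C (int N - 1 - i) * C j = D (int N - 1 - i) * D j"
            by (rule SLC) (use i j id in \<open>auto split: if_splits\<close>)
          ultimately show ?thesis by simp
        next
          case False
          hence "\<tau> + (i - j) * int M \<le> - int M \<or> \<tau> + (i - j) * int M \<ge> int M" by auto
          thus ?thesis using corz by simp
        qed
      qed
      also have "(\<Sum>i\<in>{0..<int N}. \<Sum>j\<in>{0..<int N}. C i * D j * Q' (\<tau> + (i - j) * int M))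
                    + (\<Sum>i\<in>{0..<int N}. \<Sum>j\<in>{0..<int N}. D i * C j * Q' (\<tau> + (i - j) * int M))
           = (\<Sum>r\<in>{- int M<..<int M}. Q' r * (if int M dvd (\<tau> - r) then cor N C D ((\<tau> - r) div int M) else 0))
                    + (\<Sum>r\<in>{- int M<..<int M}. Q' r * (if int M dvd (\<tau> - r) then cor N D C ((\<tau> - r) div int M) else 0))"
        using group[of M Q' N C D \<tau>] group[of M Q' N D C \<tau>] M Qs' Csupp by auto
      also have "\<dots> = (\<Sum>r\<in>{- int M<..<int M}. Q' r * (if int M dvd (\<tau> - r) then cor N C D ((\<tau> - r) div int M) + cor N D C ((\<tau> - r) div int M) else 0))"
        by (simp only: sum.distrib[symmetric], rule sum.cong[OF refl], simp add: distrib_left)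
      also have "\<dots> = 0"
      proof (rule sum.neutral, rule ballI)
        fix r assume r: "r \<in> {- int M<..<int M}"
        show "Q' r * (if int M dvd (\<tau> - r) then cor N C D ((\<tau> - r) div int M) + cor N D C ((\<tau> - r) div int M) else 0) = 0"
        proof (cases "int M dvd (\<tau> - r)")
          case True
          then obtain p where p: "\<tau> - r = p * int M" by (metis dvdE mult.commute)
          have pd: "(\<tau> - r) div int M = p" using p M by simp
          have pb: "int N - int Z \<le> \<bar>p\<bar>" using pbound[OF M T _ _ p] r by auto
          have "cor N C D p + cor N D C p = 0"
          proof (cases "\<bar>p\<bar> \<le> int N - 1")
            case True
            hence "acorr c d p + acorr d c p = 0" using pb cross by auto
            thus ?thesis using acorr_cor lc ld unfolding C_def D_def by simp
          next
            case False
            hence "p \<le> - int N \<or> p \<ge> int N" by auto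
            hence "cor N C D p = 0" "cor N D C p = 0" using Csupp by (auto intro!: cor_supp)
            thus ?thesis by simp
          qed
          thus ?thesis using pd True by simp
        next
          case False
          thus ?thesis by simp
        qed
      qed
      finally show ?thesis by simp
    qed
    show ?thesis
      unfolding CZCP_def Let_def using le lf AUTO CROSS by auto
  qed
qed

end
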